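(* Let $p\in(0,1)$, let $X,\gamma$ satisfy the standing assumptions in the context, let $m>0$ and $0\le x_0<m$. Let $q'=\inf\{\mathrm{VaR}_p(g(X)):g\in\mathcal G_{\rm bd}\}$ and assume $q'>0$ and $\mathbb P(\gamma\le\mathrm{VaR}_p(\gamma))=p$. Then the problem of minimizing $\mathrm{VaR}_p(g(X))$ over $g\in\mathcal G_{\rm bd}$ admits a $\mathbb P$-a.s. unique solution, given by $g_X(X)=m\mathds 1_{\{\gamma>c\}}+q'\mathds 1_{\{\gamma\le c\}}$, where $c=\mathrm{VaR}_p(\gamma)$.
   Context: $(\Omega,\mathcal F,\mathbb P)$ is atomless. $\mathrm{VaR}_p(Y)=\inf\{x:\mathbb P(Y\le x)\ge p\}$. Standing assumptions: $X\ge0$ is a random variable whose distribution has a positive density on its support; $\gamma:\mathbb R\to\mathbb R$ is continuous and strictly positive; $\gamma$ also denotes $\gamma(X)$; $\mathbb E[\gamma]=1$, $\mathbb E[\gamma X]<\infty$. With $\mathcal G_1$ the measurable functions $\mathbb R\to\mathbb R$, $\mathcal G_{\rm bd}=\{g\in\mathcal G_1:\mathbb E[\gamma g(X)]\ge x_0,\ 0\le g(X)\le m\}$. *)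

theory Defs
  imports "HOL-Probability.Probability"
begin

definition VaR :: "'a measure \<Rightarrow> real \<Rightarrow> ('a \<Rightarrow> real) \<Rightarrow> real" where
  "VaR M p Y = Inf {x::real. measure M {\<omega> \<in> space M. Y \<omega> \<le> x} \<ge> p}"

definition atomless :: "'a measure \<Rightarrow> bool" where
  "atomless M \<longleftrightarrow> (\<forall>A \<in> sets M. measure M A > 0 \<longrightarrow>
      (\<exists>B \<in> sets M. B \<subseteq> A \<and> 0 < measure M B \<and> measure M B < measure M A))"

definition in_support :: "'a measure \<Rightarrow> ('a \<Rightarrow> real) \<Rightarrow> real \<Rightarrow> bool" where
  "in_support M X x \<longleftrightarrow> (\<forall>e>0. measure M {\<omega> \<in> space M. X \<omega> \<in> ball x e} > 0)"

definition pos_density_on_support :: "'a measure \<Rightarrow> ('a \<Rightarrow> real) \<Rightarrow> bool" where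
  "pos_density_on_support M X \<longleftrightarrow>
     (\<exists>f. distributed M lborel X f \<and> (\<forall>x. in_support M X x \<longrightarrow> f x > 0))"

definition G_bd :: "'a measure \<Rightarrow> ('a \<Rightarrow> real) \<Rightarrow> (real \<Rightarrow> real) \<Rightarrow> real \<Rightarrow> real
    \<Rightarrow> (real \<Rightarrow> real) set" where
  "G_bd M X \<gamma> x0 m = {g. g \<in> borel_measurable borel \<and>
      (\<integral>\<omega>. \<gamma> (X \<omega>) * g (X \<omega>) \<partial>M) \<ge> x0 \<and>
      (AE \<omega> in M. 0 \<le> g (X \<omega>) \<and> g (X \<omega>) \<le> m)}"

end

theory Submission
  imports Defs
begin

lemma (in prob_space) VaR_attained:
  fixes Y :: "'a \<Rightarrow> real"
  assumes Y: "Y \<in> borel_measurable M" and nn: "AE \<omega> in M. 0 \<le> Y \<omega>"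
    and p: "0 < p" and ex: "p \<le> measure M {\<omega>\<in>space M. Y \<omega> \<le> x1}"
  shows "p \<le> measure M {\<omega>\<in>space M. Y \<omega> \<le> VaR M p Y}" "0 \<le> VaR M p Y"
proof -
  define F where "F x = measure M {\<omega>\<in>space M. Y \<omega> \<le> x}" for x
  define S where "S = {x. p \<le> F x}"
  have Fmono: "F x \<le> F y" if "x \<le> y" for x y
    unfolding F_def using that Y by (intro finite_measure_mono) auto
  have F0: "F x = 0" if "x < 0" for x
  proof -
    have "F x = measure M {}" unfolding F_def
      by (rule measure_eq_AE) (use nn that Y in auto)
    then show ?thesis by simp
  qed
  have lb: "0 \<le> s" if "s \<in> S" for s
    using that p F0[of s] unfolding S_def by force
  have ne: "S \<noteq> {}" using ex unfolding S_def F_def by auto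
  have bdd: "bdd_below S" using lb by (auto simp: bdd_below_def)
  have V: "VaR M p Y = Inf S" unfolding VaR_def S_def F_def by simp
  show "0 \<le> VaR M p Y" unfolding V using ne lb by (intro cInf_greatest) auto
  interpret D: real_distribution "distr M borel Y" using Y by simp
  have cdf: "cdf (distr M borel Y) x = F x" for x
    unfolding cdf_def F_def using Y by (subst measure_distr) (auto simp: vimage_def Int_def conj_commute)
  have cdfF: "cdf (distr M borel Y) = F" using cdf by auto
  have "continuous (at_right (Inf S)) (cdf (distr M borel Y))"
    by (rule D.cdf_is_right_cont)
  then have lim: "(F \<longlongrightarrow> F (Inf S)) (at_right (Inf S))"
    unfolding cdfF by (simp add: continuous_within)
  have ev: "eventually (\<lambda>y. p \<le> F y) (at_right (Inf S))"
    unfolding eventually_at_right_field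
  proof (intro exI[of _ "Inf S + 1"] conjI allI impI)
    fix y assume "Inf S < y"
    then obtain s where "s \<in> S" "s < y" using cInf_less_iff[OF ne bdd] by auto
    then show "p \<le> F y" using Fmono[of s y] unfolding S_def by auto
  qed simp
  have "p \<le> F (Inf S)"
    by (rule tendsto_lowerbound[OF lim ev]) simp
  then show "p \<le> measure M {\<omega>\<in>space M. Y \<omega> \<le> VaR M p Y}" unfolding V F_def .
qed


lemma (in prob_space) key_set:
  fixes Z :: "'a \<Rightarrow> real"
  assumes Z: "integrable M Z" and B: "B = {\<omega>\<in>space M. Z \<omega> \<le> c}" and A: "A \<in> sets M"
    and PA: "prob B \<le> prob A" and c: "0 \<le> c"
  shows "(\<integral>\<omega>. Z \<omega> * indicator B \<omega> \<partial>M) \<le> (\<integral>\<omega>. Z \<omega> * indicator A \<omega> \<partial>M)"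
    and "(\<integral>\<omega>. Z \<omega> * indicator A \<omega> \<partial>M) = (\<integral>\<omega>. Z \<omega> * indicator B \<omega> \<partial>M) \<Longrightarrow> 0 < c
         \<Longrightarrow> AE \<omega> in M. indicator A \<omega> = (indicator B \<omega> :: real)"
proof -
  have Zm[measurable]: "Z \<in> borel_measurable M" using Z by auto
  have Bs[measurable]: "B \<in> sets M" unfolding B by measurable
  note [measurable] = A
  define D where "D \<omega> = (Z \<omega> - c) * (indicator A \<omega> - indicator B \<omega>)" for \<omega>
  have Dnn: "0 \<le> D \<omega>" if "\<omega> \<in> space M" for \<omega>
    using that unfolding D_def B by (auto simp: indicator_def)
  have iA: "integrable M (\<lambda>\<omega>. Z \<omega> * indicator A \<omega>)" by (rule integrable_real_mult_indicator[OF A Z])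
  have iB: "integrable M (\<lambda>\<omega>. Z \<omega> * indicator B \<omega>)" by (rule integrable_real_mult_indicator[OF Bs Z])
  have iIA: "integrable M (\<lambda>\<omega>. indicator A \<omega> :: real)" using A by (simp add: integrable_indicator_iff Int_absorb2 sets.sets_into_space emeasure_finite less_top[symmetric])
  have iIB: "integrable M (\<lambda>\<omega>. indicator B \<omega> :: real)" using Bs by (simp add: integrable_indicator_iff Int_absorb2 sets.sets_into_space emeasure_finite less_top[symmetric])
  have iD: "integrable M D"
  proof -
    have "integrable M (\<lambda>\<omega>. (Z \<omega> * indicator A \<omega> - Z \<omega> * indicator B \<omega>) - c * (indicator A \<omega> - indicator B \<omega>))"
      using iA iB iIA iIB by auto
    then show ?thesis unfolding D_def by (simp add: algebra_simps)
  qed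
  have eq: "(\<integral>\<omega>. Z \<omega> * indicator A \<omega> \<partial>M) - (\<integral>\<omega>. Z \<omega> * indicator B \<omega> \<partial>M)
      = integral\<^sup>L M D + c * (prob A - prob B)"
  proof -
    have "(\<integral>\<omega>. Z \<omega> * indicator A \<omega> \<partial>M) - (\<integral>\<omega>. Z \<omega> * indicator B \<omega> \<partial>M)
        = (\<integral>\<omega>. Z \<omega> * indicator A \<omega> - Z \<omega> * indicator B \<omega> \<partial>M)"
      using iA iB by simp
    also have "\<dots> = (\<integral>\<omega>. D \<omega> + c * (indicator A \<omega> - indicator B \<omega>) \<partial>M)"
      by (rule Bochner_Integration.integral_cong) (auto simp: D_def algebra_simps)
    also have "\<dots> = integral\<^sup>L M D + c * ((\<integral>\<omega>. indicator A \<omega> \<partial>M) - (\<integral>\<omega>. indicator B \<omega> \<partial>M))"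
      using iD iIA iIB by simp
    also have "\<dots> = integral\<^sup>L M D + c * (prob A - prob B)"
      using A Bs by simp
    finally show ?thesis .
  qed
  have intD: "0 \<le> integral\<^sup>L M D" using Dnn by (intro integral_nonneg_AE AE_I2) auto
  show "(\<integral>\<omega>. Z \<omega> * indicator B \<omega> \<partial>M) \<le> (\<integral>\<omega>. Z \<omega> * indicator A \<omega> \<partial>M)"
    proof -
    have "c * (prob A - prob B) \<ge> 0" using PA c by simp
    then show ?thesis using eq intD by linarith
  qed
  assume e: "(\<integral>\<omega>. Z \<omega> * indicator A \<omega> \<partial>M) = (\<integral>\<omega>. Z \<omega> * indicator B \<omega> \<partial>M)" and cpos: "0 < c"
  have "c * (prob A - prob B) \<ge> 0" using PA c by simp
  then have D0: "integral\<^sup>L M D = 0" using eq e intD by linarith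
  then have "c * (prob A - prob B) = 0" using eq e by linarith
  then have PAB: "prob A = prob B" using cpos by simp
  have "AE \<omega> in M. D \<omega> = 0"
    using integral_nonneg_eq_0_iff_AE[OF iD] Dnn D0 by (simp add: AE_I2)
  then have sub: "AE \<omega> in M. indicator A \<omega> \<le> (indicator B \<omega> :: real)"
    using AE_space by eventually_elim (auto simp: D_def B indicator_def split: if_splits)
  have "(\<integral>\<omega>. indicator B \<omega> - indicator A \<omega> \<partial>M) = (0::real)"
    using iIA iIB PAB A Bs by simp
  moreover have "integrable M (\<lambda>\<omega>. indicator B \<omega> - indicator A \<omega> :: real)" using iIA iIB by simp
  moreover have "AE \<omega> in M. 0 \<le> (indicator B \<omega> - indicator A \<omega> :: real)"
    using sub by eventually_elim simp
  ultimately have "AE \<omega> in M. (indicator B \<omega> - indicator A \<omega> :: real) = 0"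
    using integral_nonneg_eq_0_iff_AE by blast
  then show "AE \<omega> in M. indicator A \<omega> = (indicator B \<omega> :: real)" by eventually_elim simp
qed


theorem corollary2:
  fixes M :: "'a measure" and X :: "'a \<Rightarrow> real" and \<gamma> :: "real \<Rightarrow> real"
    and p m x0 :: real
  assumes "prob_space M" and "atomless M"
    and "p \<in> {0<..<1}"
    and "X \<in> borel_measurable M" and "\<forall>\<omega>\<in>space M. X \<omega> \<ge> 0"
    and "pos_density_on_support M X"
    and "continuous_on UNIV \<gamma>" and "\<forall>x. \<gamma> x > 0"
    and "integrable M (\<lambda>\<omega>. \<gamma> (X \<omega>))" and "(\<integral>\<omega>. \<gamma> (X \<omega>) \<partial>M) = 1"
    and "integrable M (\<lambda>\<omega>. \<gamma> (X \<omega>) * X \<omega>)"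
    and "m > 0" and "0 \<le> x0" and "x0 < m"
    and q'_def: "q' = Inf ((\<lambda>g. VaR M p (\<lambda>\<omega>. g (X \<omega>))) ` G_bd M X \<gamma> x0 m)"
    and "q' > 0"
    and c_def: "c = VaR M p (\<lambda>\<omega>. \<gamma> (X \<omega>))"
    and "measure M {\<omega> \<in> space M. \<gamma> (X \<omega>) \<le> c} = p"
  shows "(\<lambda>x. if \<gamma> x > c then m else q') \<in> G_bd M X \<gamma> x0 m
    \<and> VaR M p (\<lambda>\<omega>. if \<gamma> (X \<omega>) > c then m else q') = q'
    \<and> (\<forall>g \<in> G_bd M X \<gamma> x0 m. VaR M p (\<lambda>\<omega>. g (X \<omega>)) = q' \<longrightarrow>
         (AE \<omega> in M. g (X \<omega>) = (if \<gamma> (X \<omega>) > c then m else q')))"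
proof -
  interpret prob_space M by fact
  have p0: "0 < p" and p1: "p < 1" using assms(3) by auto
  have gm[measurable]: "\<gamma> \<in> borel_measurable borel"
    using assms(7) by (intro borel_measurable_continuous_onI)
  have Xm[measurable]: "X \<in> borel_measurable M" by fact
  define Z where "Z \<omega> = \<gamma> (X \<omega>)" for \<omega>
  have Zm[measurable]: "Z \<in> borel_measurable M" unfolding Z_def by measurable
  have Zpos: "0 < Z \<omega>" for \<omega> unfolding Z_def using assms(8) by auto
  have iZ: "integrable M Z" unfolding Z_def by fact
  have EZ: "integral\<^sup>L M Z = 1" unfolding Z_def by fact
  define B where "B = {\<omega>\<in>space M. Z \<omega> \<le> c}"
  have Bs[measurable]: "B \<in> sets M" unfolding B_def by measurable
  have PB: "prob B = p" unfolding B_def Z_def by fact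
  have cpos: "0 < c"
  proof (rule ccontr)
    assume "\<not> 0 < c"
    then have "B = {}" unfolding B_def using Zpos by (auto intro: not_le_imp_less order.strict_trans2 le_less_trans)
    then show False using PB p0 by simp
  qed
  define a where "a = (\<integral>\<omega>. Z \<omega> * indicator B \<omega> \<partial>M)"
  have iZB: "integrable M (\<lambda>\<omega>. Z \<omega> * indicator B \<omega>)" by (rule integrable_real_mult_indicator[OF Bs iZ])
  have a0: "0 \<le> a" unfolding a_def using Zpos by (intro integral_nonneg_AE AE_I2) (auto simp: indicator_def less_imp_le)
  define h where "h v x = (if \<gamma> x > c then m else v)" for v x
  have hX: "h v (X \<omega>) = m - (m - v) * indicator B \<omega>" if "\<omega> \<in> space M" for v \<omega>
    using that unfolding h_def B_def Z_def by (auto simp: indicator_def)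
  have hm[measurable]: "h v \<in> borel_measurable borel" for v unfolding h_def by measurable
  have Lh: "h v \<in> G_bd M X \<gamma> x0 m \<and> VaR M p (\<lambda>\<omega>. h v (X \<omega>)) = v"
    if v0: "0 \<le> v" and vm: "v \<le> m" and vx: "x0 \<le> m - (m - v) * a" for v
  proof
    have int: "(\<integral>\<omega>. \<gamma> (X \<omega>) * h v (X \<omega>) \<partial>M) = m - (m - v) * a"
    proof -
      have "(\<integral>\<omega>. \<gamma> (X \<omega>) * h v (X \<omega>) \<partial>M) = (\<integral>\<omega>. m * Z \<omega> - (m - v) * (Z \<omega> * indicator B \<omega>) \<partial>M)"
        by (rule Bochner_Integration.integral_cong) (auto simp: hX Z_def algebra_simps)
      also have "\<dots> = m * integral\<^sup>L M Z - (m - v) * a"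
        using iZ iZB unfolding a_def by simp
      finally show ?thesis using EZ by simp
    qed
    show "h v \<in> G_bd M X \<gamma> x0 m"
      unfolding G_bd_def using int vx v0 vm hm by (auto simp: h_def)
    define F where "F x = measure M {\<omega>\<in>space M. h v (X \<omega>) \<le> x}" for x
    have "{x. p \<le> F x} = {v..}"
    proof (intro set_eqI iffI)
      fix x assume "x \<in> {x. p \<le> F x}"
      then have "p \<le> F x" by simp
      show "x \<in> {v..}"
      proof (rule ccontr)
        assume "x \<notin> {v..}"
        then have "{\<omega>\<in>space M. h v (X \<omega>) \<le> x} = {}" using vm by (auto simp: h_def)
        then have "F x = 0" unfolding F_def by (metis measure_empty)
        then show False using \<open>p \<le> F x\<close> p0 by simp
      qed
    next
      fix x assume "x \<in> {v..}"
      then have "B \<subseteq> {\<omega>\<in>space M. h v (X \<omega>) \<le> x}"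
        unfolding B_def h_def Z_def by auto
      then have "prob B \<le> F x" unfolding F_def by (intro finite_measure_mono) (auto simp: h_def)
      then show "x \<in> {x. p \<le> F x}" using PB by simp
    qed
    then show "VaR M p (\<lambda>\<omega>. h v (X \<omega>)) = v"
      unfolding VaR_def F_def by simp
  qed

  have Gf: "g \<in> borel_measurable borel" "AE \<omega> in M. 0 \<le> g (X \<omega>) \<and> g (X \<omega>) \<le> m"
     "x0 \<le> (\<integral>\<omega>. Z \<omega> * g (X \<omega>) \<partial>M)" if "g \<in> G_bd M X \<gamma> x0 m" for g
    using that unfolding G_bd_def Z_def by auto
  have iZg: "integrable M (\<lambda>\<omega>. Z \<omega> * g (X \<omega>))" if "g \<in> G_bd M X \<gamma> x0 m" for g
  proof (rule Bochner_Integration.integrable_bound[of _ "\<lambda>\<omega>. m * Z \<omega>"])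
    show "integrable M (\<lambda>\<omega>. m * Z \<omega>)" using iZ by simp
    have [measurable]: "g \<in> borel_measurable borel" using Gf[OF that] by simp
    show "(\<lambda>\<omega>. Z \<omega> * g (X \<omega>)) \<in> borel_measurable M" by measurable
    show "AE \<omega> in M. norm (Z \<omega> * g (X \<omega>)) \<le> norm (m * Z \<omega>)"
      using Gf(2)[OF that] proof eventually_elim
      case (elim \<omega>)
      then show ?case using Zpos[of \<omega>] assms(12) by (auto simp: abs_mult intro!: mult_left_mono)
    qed
  qed
  have IA: "(\<integral>\<omega>. Z \<omega> * (m - (m - s) * indicator A \<omega>) \<partial>M) = m - (m - s) * (\<integral>\<omega>. Z \<omega> * indicator A \<omega> \<partial>M)"
     "integrable M (\<lambda>\<omega>. Z \<omega> * (m - (m - s) * indicator A \<omega>))"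
    if "A \<in> sets M" for A s
  proof -
    have iZA: "integrable M (\<lambda>\<omega>. Z \<omega> * indicator A \<omega>)" by (rule integrable_real_mult_indicator[OF that iZ])
    have e: "(\<lambda>\<omega>. Z \<omega> * (m - (m - s) * indicator A \<omega>)) = (\<lambda>\<omega>. m * Z \<omega> - (m - s) * (Z \<omega> * indicator A \<omega>))"
      by (auto simp: algebra_simps)
    show "(\<integral>\<omega>. Z \<omega> * (m - (m - s) * indicator A \<omega>) \<partial>M) = m - (m - s) * (\<integral>\<omega>. Z \<omega> * indicator A \<omega> \<partial>M)"
      unfolding e using iZ iZA EZ by simp
    show "integrable M (\<lambda>\<omega>. Z \<omega> * (m - (m - s) * indicator A \<omega>))"
      unfolding e using iZ iZA by simp
  qed
  have LB: "(AE \<omega> in M. Z \<omega> * g (X \<omega>) \<le> Z \<omega> * (m - (m - s) * indicator A \<omega>))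
     \<and> (\<integral>\<omega>. Z \<omega> * g (X \<omega>) \<partial>M) \<le> m - (m - s) * (\<integral>\<omega>. Z \<omega> * indicator A \<omega> \<partial>M)
     \<and> a \<le> (\<integral>\<omega>. Z \<omega> * indicator A \<omega> \<partial>M)"
    if g: "g \<in> G_bd M X \<gamma> x0 m" and A: "A = {\<omega>\<in>space M. g (X \<omega>) \<le> s}" and pA: "p \<le> prob A" for g s A
  proof (intro conjI)
    have [measurable]: "g \<in> borel_measurable borel" using Gf[OF g] by simp
    have As: "A \<in> sets M" unfolding A by measurable
    show ae: "AE \<omega> in M. Z \<omega> * g (X \<omega>) \<le> Z \<omega> * (m - (m - s) * indicator A \<omega>)"
      using Gf(2)[OF g] AE_space proof eventually_elim
      case (elim \<omega>)
      then show ?case using Zpos[of \<omega>] by (auto simp: A indicator_def intro!: mult_left_mono)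
    qed
    show "(\<integral>\<omega>. Z \<omega> * g (X \<omega>) \<partial>M) \<le> m - (m - s) * (\<integral>\<omega>. Z \<omega> * indicator A \<omega> \<partial>M)"
      using integral_mono_AE[OF iZg[OF g] IA(2)[OF As] ae] IA(1)[OF As] by simp
    show "a \<le> (\<integral>\<omega>. Z \<omega> * indicator A \<omega> \<partial>M)"
      unfolding a_def by (rule key_set(1)[OF iZ B_def As]) (use pA PB cpos in auto)
  qed
  have VaRg: "p \<le> prob {\<omega>\<in>space M. g (X \<omega>) \<le> VaR M p (\<lambda>\<omega>. g (X \<omega>))} \<and> 0 \<le> VaR M p (\<lambda>\<omega>. g (X \<omega>))"
    if g: "g \<in> G_bd M X \<gamma> x0 m" for g
  proof -
    have [measurable]: "g \<in> borel_measurable borel" using Gf[OF g] by simp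
    have nn: "AE \<omega> in M. 0 \<le> g (X \<omega>)" using Gf(2)[OF g] by eventually_elim auto
    have "prob {\<omega>\<in>space M. g (X \<omega>) \<le> m} = prob (space M)"
      by (rule measure_eq_AE) (use Gf(2)[OF g] in auto)
    then have "p \<le> prob {\<omega>\<in>space M. g (X \<omega>) \<le> m}" using p1 by (simp add: prob_space)
    then show ?thesis using VaR_attained[of "\<lambda>\<omega>. g (X \<omega>)", OF _ nn p0] by auto
  qed
  have lowV: "x0 \<le> m - (m - VaR M p (\<lambda>\<omega>. g (X \<omega>))) * a" if g: "g \<in> G_bd M X \<gamma> x0 m" for g
  proof (cases "VaR M p (\<lambda>\<omega>. g (X \<omega>)) \<le> m")
    case True
    define V where "V = VaR M p (\<lambda>\<omega>. g (X \<omega>))"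
    define A where "A = {\<omega>\<in>space M. g (X \<omega>) \<le> V}"
    have "p \<le> prob A" using VaRg[OF g] unfolding A_def V_def by simp
    from LB[OF g A_def this] have
      "(\<integral>\<omega>. Z \<omega> * g (X \<omega>) \<partial>M) \<le> m - (m - V) * (\<integral>\<omega>. Z \<omega> * indicator A \<omega> \<partial>M)"
      "a \<le> (\<integral>\<omega>. Z \<omega> * indicator A \<omega> \<partial>M)" by auto
    moreover have "(m - V) * a \<le> (m - V) * (\<integral>\<omega>. Z \<omega> * indicator A \<omega> \<partial>M)"
      using True calculation(2) unfolding V_def by (intro mult_left_mono) auto
    ultimately show ?thesis using Gf(3)[OF g] unfolding V_def by linarith
  next
    case False
    then have "(m - VaR M p (\<lambda>\<omega>. g (X \<omega>))) * a \<le> 0" using a0 by (intro mult_nonpos_nonneg) auto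
    then show ?thesis using assms(14) by linarith
  qed
  define Q where "Q = (\<lambda>g. VaR M p (\<lambda>\<omega>. g (X \<omega>))) ` G_bd M X \<gamma> x0 m"
  have q'Q: "q' = Inf Q" unfolding Q_def q'_def ..
  have hmG: "h m \<in> G_bd M X \<gamma> x0 m" "VaR M p (\<lambda>\<omega>. h m (X \<omega>)) = m"
    using Lh[of m] assms(12,14) by auto
  have Qne: "Q \<noteq> {}" unfolding Q_def using hmG by auto
  have Qbdd: "bdd_below Q" unfolding Q_def bdd_below_def using VaRg by auto
  have q'm: "q' \<le> m" unfolding q'Q using hmG Qbdd unfolding Q_def
    by (metis cInf_lower image_eqI)
  have upper: "x0 \<le> m - (m - q') * a"
  proof (cases "a = 0")
    case True then show ?thesis using assms(14) by simp
  next
    case False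
    then have apos: "0 < a" using a0 by simp
    have "m - (m - x0) / a \<le> V" if "V \<in> Q" for V
    proof -
      from that obtain g where g: "g \<in> G_bd M X \<gamma> x0 m" and V: "V = VaR M p (\<lambda>\<omega>. g (X \<omega>))"
        unfolding Q_def by auto
      have "x0 \<le> m - (m - V) * a" using lowV[OF g] V by simp
      then have "(m - V) * a \<le> m - x0" by simp
      then have "m - V \<le> (m - x0) / a" using apos by (simp add: pos_le_divide_eq)
      then show ?thesis by simp
    qed
    then have "m - (m - x0) / a \<le> q'" unfolding q'Q using Qne by (intro cInf_greatest) auto
    then have "m - q' \<le> (m - x0) / a" by simp
    then have "(m - q') * a \<le> m - x0" using apos by (simp add: pos_le_divide_eq)
    then show ?thesis by simp
  qed
  have lower: "m - (m - q') * a \<le> x0"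
  proof (rule ccontr)
    assume nt: "\<not> ?thesis"
    define d where "d = m - (m - q') * a - x0"
    have d0: "0 < d" using nt unfolding d_def by simp
    define \<delta> where "\<delta> = min (q' / 2) (d / (a + 1))"
    have \<delta>0: "0 < \<delta>" unfolding \<delta>_def using d0 a0 assms(16) by simp
    have "\<delta> * a \<le> d / (a + 1) * a" unfolding \<delta>_def using a0 by (intro mult_right_mono) auto
    also have "\<dots> \<le> d" using a0 d0 by (simp add: field_simps)
    finally have \<delta>a: "\<delta> * a \<le> d" .
    define v where "v = q' - \<delta>"
    have v0: "0 \<le> v" unfolding v_def \<delta>_def using assms(16) by simp
    have vm: "v \<le> m" unfolding v_def using q'm \<delta>0 by simp
    have vx: "x0 \<le> m - (m - v) * a" unfolding v_def using \<delta>a unfolding d_def by (simp add: algebra_simps)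
    from Lh[OF v0 vm vx] have "v \<in> Q" unfolding Q_def by (metis image_eqI)
    then have "q' \<le> v" unfolding q'Q using Qbdd by (rule cInf_lower)
    then show False unfolding v_def using \<delta>0 by simp
  qed
  have x0eq: "x0 = m - (m - q') * a" using upper lower by simp
  have q'lt: "q' < m"
  proof (rule ccontr)
    assume "\<not> q' < m"
    then have "(m - q') * a \<le> 0" using a0 by (intro mult_nonpos_nonneg) auto
    then show False using x0eq assms(14) by simp
  qed
  have hq: "(\<lambda>x. if \<gamma> x > c then m else q') = h q'" by (auto simp: h_def)
  have P12: "h q' \<in> G_bd M X \<gamma> x0 m \<and> VaR M p (\<lambda>\<omega>. h q' (X \<omega>)) = q'"
    using Lh[of q'] assms(16) q'm upper by simp
  have P3: "AE \<omega> in M. g (X \<omega>) = (if \<gamma> (X \<omega>) > c then m else q')"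
    if g: "g \<in> G_bd M X \<gamma> x0 m" and gV: "VaR M p (\<lambda>\<omega>. g (X \<omega>)) = q'" for g
  proof -
    have [measurable]: "g \<in> borel_measurable borel" using Gf[OF g] by simp
    define A where "A = {\<omega>\<in>space M. g (X \<omega>) \<le> q'}"
    have As: "A \<in> sets M" unfolding A_def by measurable
    have pA: "p \<le> prob A" using VaRg[OF g] gV unfolding A_def by simp
    define IA where "IA = (\<integral>\<omega>. Z \<omega> * indicator A \<omega> \<partial>M)"
    from LB[OF g A_def pA] have ae: "AE \<omega> in M. Z \<omega> * g (X \<omega>) \<le> Z \<omega> * (m - (m - q') * indicator A \<omega>)"
      and l1: "(\<integral>\<omega>. Z \<omega> * g (X \<omega>) \<partial>M) \<le> m - (m - q') * IA" and l2: "a \<le> IA"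
      unfolding IA_def by auto
    have l0: "x0 \<le> (\<integral>\<omega>. Z \<omega> * g (X \<omega>) \<partial>M)" using Gf(3)[OF g] .
    have "(m - q') * a \<le> (m - q') * IA" using l2 q'lt by (intro mult_left_mono) auto
    moreover have "(m - q') * IA \<le> (m - q') * a" using l0 l1 x0eq by linarith
    ultimately have "(m - q') * IA = (m - q') * a" by linarith
    then have IAa: "IA = a" using q'lt by simp
    have eqint: "(\<integral>\<omega>. Z \<omega> * g (X \<omega>) \<partial>M) = m - (m - q') * IA" using l0 l1 x0eq IAa by (simp only: IAa)
    have AB: "AE \<omega> in M. indicator A \<omega> = (indicator B \<omega> :: real)"
      by (rule key_set(2)[OF iZ B_def As]) (use pA PB cpos IAa in \<open>auto simp: IA_def a_def\<close>)
    define D where "D \<omega> = Z \<omega> * (m - (m - q') * indicator A \<omega>) - Z \<omega> * g (X \<omega>)" for \<omega>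
    have iD: "integrable M D" unfolding D_def using IA(2)[OF As] iZg[OF g] by simp
    have "integral\<^sup>L M D = 0" unfolding D_def using IA[OF As] iZg[OF g] eqint unfolding IA_def by simp
    moreover have "AE \<omega> in M. 0 \<le> D \<omega>" using ae by eventually_elim (simp add: D_def)
    ultimately have "AE \<omega> in M. D \<omega> = 0" using integral_nonneg_eq_0_iff_AE[OF iD] by simp
    then show ?thesis using AB AE_space proof eventually_elim
      case (elim \<omega>)
      then have "Z \<omega> * g (X \<omega>) = Z \<omega> * (m - (m - q') * indicator B \<omega>)" by (simp add: D_def) (metis eq_iff_diff_eq_0)
      then have "g (X \<omega>) = m - (m - q') * indicator B \<omega>" using Zpos[of \<omega>] by simp
      then show ?case using hX[OF elim(3), of q'] by (simp add: h_def)
    qed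
  qed
  show ?thesis using P12 P3 unfolding hq by (simp add: h_def)
qed

end
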